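(* Let $Q_d$ be the $d$-dimensional hypercube graph, with $n = 2^d$ vertices. Then $\chi_{2K_2}(Q_2) = 2$, $\chi_{2K_2}(Q_3) = 4$, and for every $d \ge 4$, $$\chi_{2K_2}(Q_d) \ge \sqrt{\frac{d}{2d-1}\,2^d} + \frac12 = \sqrt{\frac{n}{2}\cdot\frac{1}{1 - 1/(2\lg n)}} + \frac12,$$ where $\lg$ denotes the base-2 logarithm.
   Context: All graphs are finite and simple. For a fixed bipartite graph $H$, a proper vertex coloring of a graph $G$ is called an $H$-avoiding coloring if for any two color classes, the subgraph of $G$ induced by their union contains no induced subgraph isomorphic to $H$. $\chi_H(G)$ denotes the minimum number of colors in an $H$-avoiding coloring of $G$. $2K_2$ is the disjoint union of two edges. $Q_d$ has vertex set $\{0,1\}^d$, two vertices adjacent iff they differ in exactly one coordinate. *)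

theory Defs
  imports Complex_Main
begin

(* A finite simple graph is given by a vertex set V and a symmetric irreflexive
   adjacency predicate E (only its restriction to V matters). *)

definition has_induced_copy ::
  "'b set \<Rightarrow> ('b \<Rightarrow> 'b \<Rightarrow> bool) \<Rightarrow> ('a \<Rightarrow> 'a \<Rightarrow> bool) \<Rightarrow> 'a set \<Rightarrow> bool" where
  "has_induced_copy VH EH E S \<longleftrightarrow>
     (\<exists>f. inj_on f VH \<and> f ` VH \<subseteq> S \<and>
          (\<forall>a\<in>VH. \<forall>b\<in>VH. E (f a) (f b) \<longleftrightarrow> EH a b))"

definition proper_coloring :: "'a set \<Rightarrow> ('a \<Rightarrow> 'a \<Rightarrow> bool) \<Rightarrow> ('a \<Rightarrow> nat) \<Rightarrow> bool" where
  "proper_coloring V E c \<longleftrightarrow> (\<forall>u\<in>V. \<forall>v\<in>V. E u v \<longrightarrow> c u \<noteq> c v)"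

definition H_avoiding_coloring ::
  "'b set \<Rightarrow> ('b \<Rightarrow> 'b \<Rightarrow> bool) \<Rightarrow> 'a set \<Rightarrow> ('a \<Rightarrow> 'a \<Rightarrow> bool) \<Rightarrow> ('a \<Rightarrow> nat) \<Rightarrow> bool" where
  "H_avoiding_coloring VH EH V E c \<longleftrightarrow>
     proper_coloring V E c \<and>
     (\<forall>i j. \<not> has_induced_copy VH EH E {v\<in>V. c v = i \<or> c v = j})"

definition chi_H ::
  "'b set \<Rightarrow> ('b \<Rightarrow> 'b \<Rightarrow> bool) \<Rightarrow> 'a set \<Rightarrow> ('a \<Rightarrow> 'a \<Rightarrow> bool) \<Rightarrow> nat" where
  "chi_H VH EH V E = (LEAST k. \<exists>c. H_avoiding_coloring VH EH V E c \<and> c ` V \<subseteq> {..<k})"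

definition twoK2_V :: "nat set" where
  "twoK2_V = {0, 1, 2, 3}"

definition twoK2_E :: "nat \<Rightarrow> nat \<Rightarrow> bool" where
  "twoK2_E a b \<longleftrightarrow> {a, b} = {0, 1} \<or> {a, b} = {2, 3}"

definition cube_V :: "nat \<Rightarrow> bool list set" where
  "cube_V d = {xs. length xs = d}"

definition cube_E :: "bool list \<Rightarrow> bool list \<Rightarrow> bool" where
  "cube_E xs ys \<longleftrightarrow> length xs = length ys \<and>
     card {i. i < length xs \<and> xs ! i \<noteq> ys ! i} = 1"

definition chi_2K2_cube :: "nat \<Rightarrow> nat" where
  "chi_2K2_cube d = chi_H twoK2_V twoK2_E (cube_V d) cube_E"

end

theory Submission
  imports Defs
begin



definition dset :: "bool list \<Rightarrow> bool list \<Rightarrow> nat set" where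
  "dset x y = {i. i < length x \<and> x!i \<noteq> y!i}"

lemma finite_dset[simp]: "finite (dset x y)"
  unfolding dset_def by auto

lemma dset_sub: "dset x y \<subseteq> {..<length x}"
  unfolding dset_def by auto

lemma cube_E_dset: "cube_E x y \<longleftrightarrow> length x = length y \<and> card (dset x y) = 1"
  unfolding cube_E_def dset_def by simp

lemma cube_E_sing: "cube_E x y \<longleftrightarrow> length x = length y \<and> (\<exists>p. dset x y = {p})"
  unfolding cube_E_dset by (simp add: card_1_singleton_iff)

lemma cube_E_of: "length x = length y \<Longrightarrow> dset x y = {p} \<Longrightarrow> cube_E x y"
  unfolding cube_E_sing by simp

lemma dset_trans: "length x = length y \<Longrightarrow> length y = length z \<Longrightarrow>
   dset x z = (dset x y - dset y z) \<union> (dset y z - dset x y)"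
  unfolding dset_def by auto

lemma dset_sym: "length x = length y \<Longrightarrow> dset x y = dset y x"
  unfolding dset_def by auto

lemma bool3: "((a::bool) \<noteq> b) = (a \<noteq> c) \<Longrightarrow> b = c" by auto
lemma dset_inj: "length x = length u \<Longrightarrow> length y = length u \<Longrightarrow> dset u x = dset u y \<Longrightarrow> x = y"
proof (rule nth_equalityI)
  assume a: "length x = length u" "length y = length u" "dset u x = dset u y"
  show "length x = length y" using a by simp
  fix i assume i: "i < length x"
  have "i \<in> dset u x \<longleftrightarrow> i \<in> dset u y" using a by simp
  then have "(u!i \<noteq> x!i) = (u!i \<noteq> y!i)" using i a unfolding dset_def by simp
  then show "x ! i = y ! i" by (rule bool3)
qed

lemma dset_self[simp]: "dset x x = {}"
  unfolding dset_def by simp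

lemma dset_empty: "length x = length y \<Longrightarrow> dset x y = {} \<Longrightarrow> x = y"
  by (rule dset_inj[of x x y]) simp_all

lemma dset_flip: "s < length x \<Longrightarrow> dset x (x[s := \<not> x!s]) = {s}"
  unfolding dset_def by (auto simp: nth_list_update)

lemma cube_E_sym: "cube_E x y \<Longrightarrow> cube_E y x"
proof -
  assume "cube_E x y"
  then obtain p where p: "dset x y = {p}" and l: "length x = length y"
    unfolding cube_E_sing by blast
  have "dset y x = {p}" using p dset_sym[OF l] by simp
  then show ?thesis using l by (intro cube_E_of) simp_all
qed

lemma cube_E_irrefl: "\<not> cube_E x x"
  unfolding cube_E_dset by simp

lemma F1:
  assumes "u \<noteq> v" "cube_E u w1" "cube_E u w2" "cube_E u w3"
    "cube_E w1 v" "cube_E w2 v" "cube_E w3 v" "w1 \<noteq> w2" "w1 \<noteq> w3" "w2 \<noteq> w3"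
  shows False
proof -
  have key: "\<exists>p. dset u w = {p} \<and> p \<in> dset u v \<and> card (dset u v) = 2"
    if h1: "cube_E u w" and h2: "cube_E w v" for w
  proof -
    obtain p where p: "dset u w = {p}" and l1: "length u = length w"
      using h1 unfolding cube_E_sing by blast
    obtain q where q: "dset w v = {q}" and l2: "length w = length v"
      using h2 unfolding cube_E_sing by blast
    have t: "dset u v = ({p} - {q}) \<union> ({q} - {p})"
      using dset_trans[OF l1 l2] p q by simp
    have "p \<noteq> q"
    proof
      assume "p = q" then have "dset u v = {}" using t by simp
      then show False using dset_empty l1 l2 \<open>u \<noteq> v\<close> by simp
    qed
    then show ?thesis using t p by auto
  qed
  obtain p1 where p1: "dset u w1 = {p1}" "p1 \<in> dset u v" "card (dset u v) = 2"
    using key[OF assms(2) assms(5)] by blast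
  obtain p2 where p2: "dset u w2 = {p2}" "p2 \<in> dset u v"
    using key[OF assms(3) assms(6)] by blast
  obtain p3 where p3: "dset u w3 = {p3}" "p3 \<in> dset u v"
    using key[OF assms(4) assms(7)] by blast
  have len: "length w1 = length u" "length w2 = length u" "length w3 = length u"
    using assms(2-4) unfolding cube_E_def by simp_all
  have "p1 \<noteq> p2" using dset_inj[of w1 u w2] len p1 p2 assms(8) by auto
  moreover have "p1 \<noteq> p3" using dset_inj[of w1 u w3] len p1 p3 assms(9) by auto
  moreover have "p2 \<noteq> p3" using dset_inj[of w2 u w3] len p2 p3 assms(10) by auto
  ultimately have "card {p1,p2,p3} = 3" by simp
  moreover have "card {p1,p2,p3} \<le> card (dset u v)"
    using p1 p2 p3 by (intro card_mono) auto
  ultimately show False using p1 by simp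
qed

definition nbr :: "bool list \<Rightarrow> bool list set" where
  "nbr x = {v. cube_E x v}"

lemma nbr_eq: "nbr x = (\<lambda>i. x[i := \<not> x!i]) ` {..<length x}"
proof
  show "nbr x \<subseteq> (\<lambda>i. x[i := \<not> x!i]) ` {..<length x}"
  proof
    fix v assume "v \<in> nbr x"
    then obtain p where p: "dset x v = {p}" and l: "length x = length v"
      unfolding nbr_def cube_E_sing by auto
    have pl: "p < length x" using p dset_sub[of x v] by auto
    have "v = x[p := \<not> x!p]"
      using dset_inj[of v x "x[p := \<not> x!p]"] l p dset_flip[OF pl] by simp
    then show "v \<in> (\<lambda>i. x[i := \<not> x!i]) ` {..<length x}" using pl by auto
  qed
  show "(\<lambda>i. x[i := \<not> x!i]) ` {..<length x} \<subseteq> nbr x"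
    unfolding nbr_def cube_E_sing using dset_flip by auto
qed

lemma card_nbr: "card (nbr x) = length x"
proof -
  have "inj_on (\<lambda>i. x[i := \<not> x!i]) {..<length x}"
  proof (rule inj_onI)
    fix i j assume ij: "i \<in> {..<length x}" "j \<in> {..<length x}" and e: "x[i := \<not> x!i] = x[j := \<not> x!j]"
    have "dset x (x[i := \<not> x!i]) = dset x (x[j := \<not> x!j])" using e by (rule arg_cong)
    then have "{i} = {j}" using dset_flip[of i x] dset_flip[of j x] ij by simp
    then show "i = j" by simp
  qed
  then show ?thesis unfolding nbr_eq by (simp add: card_image)
qed

lemma finite_nbr: "finite (nbr x)"
  unfolding nbr_eq by simp

lemma finite_cube: "finite (cube_V d)"
  using finite_lists_length_eq[of "UNIV::bool set" d] unfolding cube_V_def by simp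

lemma card_cube: "card (cube_V d) = 2 ^ d"
  using card_lists_length_eq[of "UNIV::bool set" d] unfolding cube_V_def by simp

lemma nbr_cube: "x \<in> cube_V d \<Longrightarrow> nbr x \<subseteq> cube_V d"
  unfolding nbr_def cube_V_def cube_E_def by auto

lemma total_edges: "card {(u,v). u \<in> cube_V d \<and> v \<in> cube_V d \<and> cube_E u v} = d * 2^d"
proof -
  have "{(u,v). u \<in> cube_V d \<and> v \<in> cube_V d \<and> cube_E u v} = Sigma (cube_V d) nbr"
    using nbr_cube unfolding nbr_def by blast
  moreover have "card (Sigma (cube_V d) nbr) = (\<Sum>u\<in>cube_V d. card (nbr u))"
    using finite_cube finite_nbr by simp
  moreover have "(\<Sum>u\<in>cube_V d. card (nbr u)) = (\<Sum>u\<in>cube_V d. d)"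
    using card_nbr unfolding cube_V_def by simp
  ultimately show ?thesis using card_cube by simp
qed

lemma F5:
  assumes d: "3 \<le> d" and x: "x \<in> cube_V d" and y: "y \<in> cube_V d" and e: "cube_E x y"
  shows "\<exists>a b a' b'. cube_E a y \<and> cube_E x b \<and> cube_E a b \<and> cube_E a' y \<and> cube_E x b' \<and> cube_E a' b'
     \<and> a \<noteq> x \<and> b \<noteq> y \<and> a' \<noteq> x \<and> b' \<noteq> y \<and> a \<noteq> a'"
proof -
  have lx: "length x = d" and ly: "length y = d" using x y unfolding cube_V_def by auto
  obtain r where r: "dset x y = {r}" using e unfolding cube_E_sing by auto
  have "card ({..<d} - {r}) \<ge> 2" using d by (auto simp: card_Diff_singleton_if)
  then obtain s t where st: "s \<in> {..<d} - {r}" "t \<in> {..<d} - {r}" "s \<noteq> t"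
  proof -
    have "\<not> card ({..<d} - {r}) \<le> Suc 0" using \<open>card ({..<d} - {r}) \<ge> 2\<close> by simp
    then have "\<exists>s\<in>{..<d} - {r}. \<exists>t\<in>{..<d} - {r}. s \<noteq> t"
      using card_le_Suc0_iff_eq[of "{..<d} - {r}"] by auto
    then show ?thesis using that by auto
  qed
  define a where "a = y[s := \<not> y!s]"
  define b where "b = x[s := \<not> x!s]"
  define a' where "a' = y[t := \<not> y!t]"
  define b' where "b' = x[t := \<not> x!t]"
  have ya: "dset y a = {s}" unfolding a_def using dset_flip st ly by auto
  have xb: "dset x b = {s}" unfolding b_def using dset_flip st lx by auto
  have ya': "dset y a' = {t}" unfolding a'_def using dset_flip st ly by auto
  have xb': "dset x b' = {t}" unfolding b'_def using dset_flip st lx by auto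
  have la: "length a = d" "length b = d" "length a' = d" "length b' = d"
    unfolding a_def b_def a'_def b'_def using lx ly by auto
  have yx: "dset y x = {r}" using r dset_sym[of x y] lx ly by simp
  have ab: "dset a b = {r}"
  proof -
    have "dset y b = {r, s}" using dset_trans[of y x b] lx ly la yx xb st by auto
    moreover have "dset a y = {s}" using ya dset_sym[of a y] la ly by simp
    ultimately show ?thesis using dset_trans[of a y b] la ly st by auto
  qed
  have ab': "dset a' b' = {r}"
  proof -
    have "dset y b' = {r, t}" using dset_trans[of y x b'] lx ly la yx xb' st by auto
    moreover have "dset a' y = {t}" using ya' dset_sym[of a' y] la ly by simp
    ultimately show ?thesis using dset_trans[of a' y b'] la ly st by auto
  qed
  have "cube_E y a" using cube_E_of[OF _ ya] la ly by simp
  then have "cube_E a y" by (rule cube_E_sym)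
  moreover have "cube_E y a'" using cube_E_of[OF _ ya'] la ly by simp
  then have "cube_E a' y" by (rule cube_E_sym)
  moreover have "cube_E x b" using cube_E_of[OF _ xb] la lx by simp
  moreover have "cube_E x b'" using cube_E_of[OF _ xb'] la lx by simp
  moreover have "cube_E a b" using cube_E_of[OF _ ab] la by simp
  moreover have "cube_E a' b'" using cube_E_of[OF _ ab'] la by simp
  moreover have "a \<noteq> x" using ya yx st by auto
  moreover have "a' \<noteq> x" using ya' yx st by auto
  moreover have "b \<noteq> y" using xb r st by auto
  moreover have "b' \<noteq> y" using xb' r st by auto
  moreover have "a \<noteq> a'" using ya ya' st by auto
  ultimately have "cube_E a y \<and> cube_E x b \<and> cube_E a b \<and> cube_E a' y \<and> cube_E x b' \<and> cube_E a' b'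
     \<and> a \<noteq> x \<and> b \<noteq> y \<and> a' \<noteq> x \<and> b' \<noteq> y \<and> a \<noteq> a'" by simp
  then show ?thesis by (intro exI[of _ a] exI[of _ b] exI[of _ a'] exI[of _ b'])
qed




lemma exists_max:
  assumes "finite A" "x0 \<in> A"
  shows "\<exists>x\<in>A. \<forall>a\<in>A. (f a::nat) \<le> f x"
proof -
  have ne: "f ` A \<noteq> {}" using assms by auto
  have "Max (f ` A) \<in> f ` A" using Max_in[OF _ ne] assms(1) by simp
  then obtain x where x: "x \<in> A" "f x = Max (f ` A)" by auto
  have "\<forall>a\<in>A. f a \<le> Max (f ` A)" using assms(1) by simp
  then show ?thesis using x by metis
qed

lemma chain_bound:
  fixes E :: "'a \<Rightarrow> 'a \<Rightarrow> bool" and A B :: "'a set"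
  assumes finA: "finite A" and finB: "finite B"
  and sym: "\<And>u v. E u v \<Longrightarrow> E v u"
  and free: "\<And>a b a' b'. a\<in>A \<Longrightarrow> a'\<in>A \<Longrightarrow> b\<in>B \<Longrightarrow> b'\<in>B \<Longrightarrow> E a b \<Longrightarrow> E a' b' \<Longrightarrow>
              a\<noteq>a' \<Longrightarrow> b\<noteq>b' \<Longrightarrow> E a b' \<or> E a' b"
  and F1: "\<And>u v w1 w2 w3. u \<noteq> v \<Longrightarrow> E u w1 \<Longrightarrow> E u w2 \<Longrightarrow> E u w3 \<Longrightarrow> E w1 v \<Longrightarrow> E w2 v \<Longrightarrow> E w3 v
              \<Longrightarrow> w1\<noteq>w2 \<Longrightarrow> w1\<noteq>w3 \<Longrightarrow> w2\<noteq>w3 \<Longrightarrow> False"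
  and P: "P = {(a,b). a\<in>A \<and> b\<in>B \<and> E a b}"
  and ne: "(a0,b0) \<in> P"
  shows "\<exists>x y. x\<in>A \<and> y\<in>B \<and> E x y \<and> card P \<le> card {b\<in>B. E x b} + card {a\<in>A. E a y} \<and>
   (\<forall>a b a' b'. (a,b)\<in>P \<longrightarrow> (a',b')\<in>P \<longrightarrow> a\<noteq>x \<longrightarrow> b\<noteq>y \<longrightarrow> a'\<noteq>x \<longrightarrow> b'\<noteq>y \<longrightarrow> a=a' \<and> b=b')"
proof -
  define NB where "NB z = {b\<in>B. E z b}" for z
  define NA where "NA z = {a\<in>A. E a z}" for z
  have a0: "a0 \<in> A" "b0 \<in> B" "E a0 b0" using ne P by auto
  have finNB: "finite (NB z)" for z unfolding NB_def using finB by simp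
  have finNA: "finite (NA z)" for z unfolding NA_def using finA by simp
  obtain x where x: "x \<in> A" and xmax: "\<forall>a\<in>A. card (NB a) \<le> card (NB x)"
    using exists_max[OF finA a0(1), of "\<lambda>a. card (NB a)"] by blast
  obtain y where y: "y \<in> B" and ymax: "\<forall>b\<in>B. card (NA b) \<le> card (NA y)"
    using exists_max[OF finB a0(2), of "\<lambda>b. card (NA b)"] by blast
  have noA: False if "a \<in> A" "NB x \<subseteq> NB a" "b \<in> NB a" "b \<notin> NB x" for a b
  proof -
    have "NB x \<subset> NB a" using that by blast
    then have "card (NB x) < card (NB a)" using finNB by (rule psubset_card_mono[rotated])
    then show False using xmax that(1) by force
  qed
  have noB: False if "b \<in> B" "NA y \<subseteq> NA b" "a \<in> NA b" "a \<notin> NA y" for a b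
  proof -
    have "NA y \<subset> NA b" using that by blast
    then have "card (NA y) < card (NA b)" using finNA by (rule psubset_card_mono[rotated])
    then show False using ymax that(1) by force
  qed
  have "card (NA b0) \<ge> 1"
  proof -
    have "a0 \<in> NA b0" unfolding NA_def using a0 by simp
    then show ?thesis using finNA[of b0] by (metis One_nat_def Suc_leI card_gt_0_iff empty_iff)
  qed
  then have "card (NA y) \<ge> 1" using ymax a0(2) by force
  then obtain a1 where a1: "a1 \<in> A" "E a1 y" unfolding NA_def
    by (metis (no_types, lifting) card.empty empty_Collect_eq not_one_le_zero)
  have xy: "E x y"
  proof (rule ccontr)
    assume nxy: "\<not> E x y"
    have a1x: "a1 \<noteq> x" using a1 nxy by blast
    have "NB x \<subseteq> NB a1"
    proof
      fix b assume b: "b \<in> NB x"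
      have bB: "b \<in> B" "E x b" using b unfolding NB_def by auto
      have "b \<noteq> y" using bB(2) nxy by blast
      then have "E x y \<or> E a1 b" using free[OF x a1(1) bB(1) y bB(2) a1(2)] a1x by blast
      then show "b \<in> NB a1" using nxy bB unfolding NB_def by blast
    qed
    moreover have "y \<in> NB a1" unfolding NB_def using y a1 by blast
    moreover have "y \<notin> NB x" unfolding NB_def using nxy by blast
    ultimately show False using noA[OF a1(1)] by blast
  qed
  have extra: "E x b \<and> E a y" if ab: "(a,b) \<in> P" "a \<noteq> x" "b \<noteq> y" for a b
  proof
    have abA: "a \<in> A" "b \<in> B" "E a b" using ab P by auto
    show "E x b"
    proof (rule ccontr)
      assume nxb: "\<not> E x b"
      have "NB x \<subseteq> NB a"
      proof
        fix b' assume b': "b' \<in> NB x"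
        have bB: "b' \<in> B" "E x b'" using b' unfolding NB_def by auto
        have "b \<noteq> b'" using bB(2) nxb by blast
        then have "E a b' \<or> E x b" using free[OF abA(1) x abA(2) bB(1) abA(3) bB(2)] ab(2) by blast
        then show "b' \<in> NB a" using nxb bB unfolding NB_def by blast
      qed
      moreover have "b \<in> NB a" unfolding NB_def using abA by blast
      moreover have "b \<notin> NB x" unfolding NB_def using nxb by blast
      ultimately show False using noA[OF abA(1)] by blast
    qed
    show "E a y"
    proof (rule ccontr)
      assume nay: "\<not> E a y"
      have "NA y \<subseteq> NA b"
      proof
        fix a' assume a': "a' \<in> NA y"
        have aA: "a' \<in> A" "E a' y" using a' unfolding NA_def by auto
        have "a \<noteq> a'" using aA(2) nay by blast
        then have "E a y \<or> E a' b" using free[OF abA(1) aA(1) abA(2) y abA(3) aA(2)] ab(3) by blast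
        then show "a' \<in> NA b" using nay aA unfolding NA_def by blast
      qed
      moreover have "a \<in> NA b" unfolding NA_def using abA by blast
      moreover have "a \<notin> NA y" unfolding NA_def using nay by blast
      ultimately show False using noB[OF abA(2)] by blast
    qed
  qed
  have uniq: "a = a' \<and> b = b'" if h: "(a,b)\<in>P" "(a',b')\<in>P" "a\<noteq>x" "b\<noteq>y" "a'\<noteq>x" "b'\<noteq>y" for a b a' b'
  proof -
    have e1: "E a b" "a \<in> A" "b \<in> B" using h(1) P by auto
    have e2: "E a' b'" "a' \<in> A" "b' \<in> B" using h(2) P by auto
    have x1: "E x b" "E a y" using extra[OF h(1) h(3) h(4)] by auto
    have x2: "E x b'" "E a' y" using extra[OF h(2) h(5) h(6)] by auto
    show ?thesis
    proof (cases "a = a'")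
      case True
      show ?thesis
      proof (rule ccontr)
        assume "\<not> (a = a' \<and> b = b')"
        then have "b \<noteq> b'" using True by blast
        then show False
          using F1[of a x y b b'] h True e1 e2 x1 x2 xy sym[OF xy] sym[OF x1(1)] sym[OF x2(1)] sym[OF e1(1)] sym[OF e2(1)] by blast
      qed
    next
      case False
      have "b \<noteq> b'"
      proof
        assume bb: "b = b'"
        show False using F1[of b y x a a'] h bb False e1 e2 x1 x2 xy sym[OF xy] sym[OF x1(1)] sym[OF x2(1)] sym[OF e1(1)] sym[OF e2(1)] by blast
      qed
      then have "E a b' \<or> E a' b" using free[OF e1(2) e2(2) e1(3) e2(3) e1(1) e2(1) False] by blast
      then show ?thesis
      proof
        assume "E a b'"
        then show ?thesis using F1[of a x y b b'] h \<open>b \<noteq> b'\<close> e1 e2 x1 x2 xy sym[OF xy] sym[OF x1(1)] sym[OF x2(1)] sym[OF e1(1)] sym[OF e2(1)] by blast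
      next
        assume "E a' b"
        then show ?thesis using F1[of a' x y b b'] h \<open>b \<noteq> b'\<close> e1 e2 x1 x2 xy sym[OF xy] sym[OF x1(1)] sym[OF x2(1)] sym[OF e1(1)] sym[OF e2(1)] by blast
      qed
    qed
  qed
  define S1 where "S1 = (\<lambda>b. (x,b)) ` NB x"
  define S2 where "S2 = (\<lambda>a. (a,y)) ` (NA y - {x})"
  define X where "X = {p\<in>P. fst p \<noteq> x \<and> snd p \<noteq> y}"
  have sub: "P \<subseteq> S1 \<union> S2 \<union> X"
  proof
    fix p assume p: "p \<in> P"
    obtain a b where pab: "p = (a,b)" by (cases p)
    have abA: "a \<in> A" "b \<in> B" "E a b" using p pab P by auto
    show "p \<in> S1 \<union> S2 \<union> X"
    proof (cases "a = x")
      case True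
      then have "b \<in> NB x" unfolding NB_def using abA by blast
      then show ?thesis unfolding S1_def using pab True by blast
    next
      case False
      show ?thesis
      proof (cases "b = y")
        case True
        then have "a \<in> NA y - {x}" unfolding NA_def using abA False by blast
        then show ?thesis unfolding S2_def using pab True by blast
      next
        case False2: False
        then show ?thesis unfolding X_def using p pab False by auto
      qed
    qed
  qed
  have finP: "finite P"
  proof (rule finite_subset)
    show "P \<subseteq> A \<times> B" unfolding P by auto
    show "finite (A \<times> B)" using finA finB by simp
  qed
  have c1: "card S1 \<le> card (NB x)" unfolding S1_def by (rule card_image_le[OF finNB])
  have c2: "card S2 \<le> card (NA y) - 1"
  proof -
    have "card S2 \<le> card (NA y - {x})" unfolding S2_def by (rule card_image_le) (simp add: finNA)
    moreover have "x \<in> NA y" unfolding NA_def using x xy by blast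
    ultimately show ?thesis using finNA[of y] by (simp add: card_Diff_singleton)
  qed
  have c3: "card X \<le> 1"
  proof -
    have "\<forall>p\<in>X. \<forall>q\<in>X. p = q"
    proof (intro ballI)
      fix p q assume p: "p \<in> X" and q: "q \<in> X"
      obtain a b where pab: "p = (a,b)" by (cases p)
      obtain a' b' where qab: "q = (a',b')" by (cases q)
      have "a = a' \<and> b = b'" using uniq[of a b a' b'] p q pab qab unfolding X_def by auto
      then show "p = q" using pab qab by simp
    qed
    moreover have "finite X" unfolding X_def using finP by simp
    ultimately show ?thesis using card_le_Suc0_iff_eq by (metis One_nat_def)
  qed
  have "card P \<le> card (S1 \<union> S2 \<union> X)"
    using sub by (rule card_mono[rotated]) (simp add: S1_def S2_def X_def finNB finNA finP)
  also have "\<dots> \<le> card S1 + card S2 + card X"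
    by (metis card_Un_le add_le_mono1 order_trans)
  also have "\<dots> \<le> card (NB x) + card (NA y)"
    using c1 c2 c3 \<open>card (NA y) \<ge> 1\<close> by linarith
  finally have "card P \<le> card (NB x) + card (NA y)" .
  then show ?thesis using x y xy uniq unfolding NB_def NA_def by blast
qed




lemma make_copy:
  assumes S: "a \<in> S" "b \<in> S" "a' \<in> S" "b' \<in> S"
  and dist: "a \<noteq> b" "a \<noteq> a'" "a \<noteq> b'" "b \<noteq> a'" "b \<noteq> b'" "a' \<noteq> b'"
  and e: "E a b" "E b a" "E a' b'" "E b' a'"
  and ne: "\<not>E a a'" "\<not>E a' a" "\<not>E a b'" "\<not>E b' a" "\<not>E b a'" "\<not>E a' b" "\<not>E b b'" "\<not>E b' b"
  and irr: "\<not>E a a" "\<not>E b b" "\<not>E a' a'" "\<not>E b' b'"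
  shows "has_induced_copy twoK2_V twoK2_E E S"
proof -
  define f where "f n = (if n = (0::nat) then a else if n = 1 then b else if n = 2 then a' else b')" for n
  have f: "f 0 = a" "f 1 = b" "f 2 = a'" "f 3 = b'" unfolding f_def by simp_all
  have "inj_on f twoK2_V"
    unfolding twoK2_V_def inj_on_def using dist f by auto
  moreover have "f ` twoK2_V \<subseteq> S" unfolding twoK2_V_def using S f by auto
  moreover have "\<forall>m\<in>twoK2_V. \<forall>n\<in>twoK2_V. E (f m) (f n) \<longleftrightarrow> twoK2_E m n"
    unfolding twoK2_V_def twoK2_E_def using f e ne irr by (auto simp: doubleton_eq_iff)
  ultimately show ?thesis unfolding has_induced_copy_def by blast
qed

lemma pair_bound:
  assumes d: "3 \<le> d" and c: "H_avoiding_coloring twoK2_V twoK2_E (cube_V d) cube_E c"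
    and ij: "i \<noteq> j"
  shows "card {(u,v). u \<in> cube_V d \<and> v \<in> cube_V d \<and> c u = i \<and> c v = j \<and> cube_E u v} \<le> 2*d - 1"
proof -
  define V where "V = cube_V d"
  define A where "A = {v\<in>V. c v = i}"
  define B where "B = {v\<in>V. c v = j}"
  define P where "P = {(a,b). a\<in>A \<and> b\<in>B \<and> cube_E a b}"
  have PP: "{(u,v). u \<in> cube_V d \<and> v \<in> cube_V d \<and> c u = i \<and> c v = j \<and> cube_E u v} = P"
    unfolding P_def A_def B_def V_def by auto
  have proper: "\<And>u v. u \<in> V \<Longrightarrow> v \<in> V \<Longrightarrow> cube_E u v \<Longrightarrow> c u \<noteq> c v"
    using c unfolding H_avoiding_coloring_def proper_coloring_def V_def by blast
  have nocopy: "\<not> has_induced_copy twoK2_V twoK2_E cube_E {v\<in>V. c v = i \<or> c v = j}"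
    using c unfolding H_avoiding_coloring_def V_def by blast
  have finA: "finite A" unfolding A_def V_def using finite_cube by simp
  have finB: "finite B" unfolding B_def V_def using finite_cube by simp
  have free: "cube_E a b' \<or> cube_E a' b"
    if h: "a\<in>A" "a'\<in>A" "b\<in>B" "b'\<in>B" "cube_E a b" "cube_E a' b'" "a\<noteq>a'" "b\<noteq>b'" for a b a' b'
  proof (rule ccontr)
    assume n: "\<not> (cube_E a b' \<or> cube_E a' b)"
    have cc: "c a = i" "c a' = i" "c b = j" "c b' = j" "a \<in> V" "a' \<in> V" "b \<in> V" "b' \<in> V"
      using h unfolding A_def B_def by auto
    have "has_induced_copy twoK2_V twoK2_E cube_E {v\<in>V. c v = i \<or> c v = j}"
    proof (rule make_copy)
      show "a \<in> {v\<in>V. c v = i \<or> c v = j}" "b \<in> {v\<in>V. c v = i \<or> c v = j}"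
        "a' \<in> {v\<in>V. c v = i \<or> c v = j}" "b' \<in> {v\<in>V. c v = i \<or> c v = j}" using cc by auto
      show "a \<noteq> b" "a \<noteq> b'" "a' \<noteq> b'" "b \<noteq> a'" using cc ij by auto
      show "a \<noteq> a'" "b \<noteq> b'" using h by auto
      show "cube_E a b" "cube_E b a" "cube_E a' b'" "cube_E b' a'" using h cube_E_sym by auto
      show "\<not>cube_E a b'" "\<not>cube_E b' a" "\<not>cube_E b a'" "\<not>cube_E a' b"
        using n cube_E_sym by auto
      show "\<not>cube_E a a'" using proper[of a a'] cc by auto
      show "\<not>cube_E a' a" using proper[of a' a] cc by auto
      show "\<not>cube_E b b'" using proper[of b b'] cc by auto
      show "\<not>cube_E b' b" using proper[of b' b] cc by auto
      show "\<not>cube_E a a" "\<not>cube_E b b" "\<not>cube_E a' a'" "\<not>cube_E b' b'" using cube_E_irrefl by auto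
    qed
    then show False using nocopy by blast
  qed
  show ?thesis
  proof (cases "P = {}")
    case True then show ?thesis unfolding PP by simp
  next
    case False
    then obtain a0 b0 where ab0: "(a0,b0) \<in> P" by auto
    obtain x y where xy: "x\<in>A" "y\<in>B" "cube_E x y"
      and cP: "card P \<le> card {b\<in>B. cube_E x b} + card {a\<in>A. cube_E a y}"
      and uniq: "\<forall>a b a' b'. (a,b)\<in>P \<longrightarrow> (a',b')\<in>P \<longrightarrow> a\<noteq>x \<longrightarrow> b\<noteq>y \<longrightarrow> a'\<noteq>x \<longrightarrow> b'\<noteq>y \<longrightarrow> a=a' \<and> b=b'"
    proof -
      have "\<exists>x y. x\<in>A \<and> y\<in>B \<and> cube_E x y \<and> card P \<le> card {b\<in>B. cube_E x b} + card {a\<in>A. cube_E a y} \<and>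
        (\<forall>a b a' b'. (a,b)\<in>P \<longrightarrow> (a',b')\<in>P \<longrightarrow> a\<noteq>x \<longrightarrow> b\<noteq>y \<longrightarrow> a'\<noteq>x \<longrightarrow> b'\<noteq>y \<longrightarrow> a=a' \<and> b=b')"
        apply (rule chain_bound[of A B cube_E P a0 b0])
              apply (rule finA)
             apply (rule finB)
            apply (erule cube_E_sym)
           apply (rule free; assumption)
          apply (rule F1; assumption)
         apply (rule P_def)
        apply (rule ab0)
        done
      then show ?thesis using that by blast
    qed
    have xV: "x \<in> cube_V d" "y \<in> cube_V d" using xy unfolding A_def B_def V_def by auto
    have lx: "length x = d" "length y = d" using xV unfolding cube_V_def by auto
    have sub1: "{b\<in>B. cube_E x b} \<subseteq> nbr x" unfolding nbr_def by auto
    have ny: "{a. cube_E a y} = nbr y" unfolding nbr_def using cube_E_sym by auto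
    have sub2: "{a\<in>A. cube_E a y} \<subseteq> nbr y" using ny by auto
    have c1: "card {b\<in>B. cube_E x b} \<le> d" using card_mono[OF finite_nbr sub1] card_nbr lx by simp
    have c2: "card {a\<in>A. cube_E a y} \<le> d" using card_mono[OF finite_nbr sub2] card_nbr lx by simp
    have "card P \<le> 2*d - 1"
    proof (rule ccontr)
      assume "\<not> card P \<le> 2*d - 1"
      then have "card P \<ge> 2*d" by simp
      then have e1: "card {b\<in>B. cube_E x b} = card (nbr x)" and e2: "card {a\<in>A. cube_E a y} = card (nbr y)"
        using cP c1 c2 card_nbr lx by simp_all
      have N1: "{b\<in>B. cube_E x b} = nbr x" using card_subset_eq[OF finite_nbr sub1 e1] .
      have N2: "{a\<in>A. cube_E a y} = nbr y" using card_subset_eq[OF finite_nbr sub2 e2] .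
      obtain a b a' b' where F: "cube_E a y" "cube_E x b" "cube_E a b" "cube_E a' y" "cube_E x b'" "cube_E a' b'"
        "a \<noteq> x" "b \<noteq> y" "a' \<noteq> x" "b' \<noteq> y" "a \<noteq> a'"
        using F5[OF d xV(1) xV(2) xy(3)] by blast
      have "a \<in> nbr y" "a' \<in> nbr y" using F ny by auto
      then have aA: "a \<in> A" "a' \<in> A" using N2 by auto
      have "b \<in> nbr x" "b' \<in> nbr x" using F unfolding nbr_def by auto
      then have bB: "b \<in> B" "b' \<in> B" using N1 by auto
      have "(a,b) \<in> P" "(a',b') \<in> P" unfolding P_def using aA bB F by auto
      then show False using uniq F by blast
    qed
    then show ?thesis using PP by simp
  qed
qed

lemma main_ineq:
  assumes d: "3 \<le> d" and c: "H_avoiding_coloring twoK2_V twoK2_E (cube_V d) cube_E c"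
    and k: "c ` cube_V d \<subseteq> {..<k}"
  shows "d * 2^d \<le> k * (k - 1) * (2*d - 1)"
proof -
  define D where "D i j = {(u,v). u \<in> cube_V d \<and> v \<in> cube_V d \<and> c u = i \<and> c v = j \<and> cube_E u v}" for i j
  have sub: "{(u,v). u \<in> cube_V d \<and> v \<in> cube_V d \<and> cube_E u v} \<subseteq> (\<Union>i\<in>{..<k}. \<Union>j\<in>{..<k}-{i}. D i j)"
  proof
    fix p assume p: "p \<in> {(u,v). u \<in> cube_V d \<and> v \<in> cube_V d \<and> cube_E u v}"
    obtain u v where uv: "p = (u,v)" by (cases p)
    have h: "u \<in> cube_V d" "v \<in> cube_V d" "cube_E u v" using p uv by auto
    have "c u \<noteq> c v" using c h unfolding H_avoiding_coloring_def proper_coloring_def by blast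
    moreover have "c u < k" "c v < k" using k h by auto
    ultimately have "p \<in> D (c u) (c v)" "c u \<in> {..<k}" "c v \<in> {..<k} - {c u}"
      unfolding D_def using h uv by auto
    then show "p \<in> (\<Union>i\<in>{..<k}. \<Union>j\<in>{..<k}-{i}. D i j)" by blast
  qed
  have finD: "finite (D i j)" for i j
  proof (rule finite_subset)
    show "D i j \<subseteq> cube_V d \<times> cube_V d" unfolding D_def by auto
    show "finite (cube_V d \<times> cube_V d)" using finite_cube by simp
  qed
  have "d * 2^d = card {(u,v). u \<in> cube_V d \<and> v \<in> cube_V d \<and> cube_E u v}"
    using total_edges by simp
  also have "\<dots> \<le> card (\<Union>i\<in>{..<k}. \<Union>j\<in>{..<k}-{i}. D i j)"
    using sub by (rule card_mono[rotated]) (simp add: finD)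
  also have "\<dots> \<le> (\<Sum>i\<in>{..<k}. card (\<Union>j\<in>{..<k}-{i}. D i j))"
    by (rule card_UN_le) simp
  also have "\<dots> \<le> (\<Sum>i\<in>{..<k}. \<Sum>j\<in>{..<k}-{i}. card (D i j))"
    by (intro sum_mono card_UN_le) simp
  also have "\<dots> \<le> (\<Sum>i\<in>{..<k}. \<Sum>j\<in>{..<k}-{i}. 2*d - 1)"
  proof (intro sum_mono)
    fix i j assume "i \<in> {..<k}" "j \<in> {..<k} - {i}"
    then have "i \<noteq> j" by auto
    then show "card (D i j) \<le> 2*d - 1" unfolding D_def using pair_bound[OF d c] by blast
  qed
  also have "\<dots> = (\<Sum>i\<in>{..<k}. (k - 1) * (2*d - 1))"
    by (intro sum.cong refl) (simp add: card_Diff_singleton)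
  also have "\<dots> = k * (k - 1) * (2*d - 1)" by simp
  finally show ?thesis .
qed

lemma exists_col:
  "\<exists>c. H_avoiding_coloring twoK2_V twoK2_E (cube_V d) cube_E c \<and> c ` cube_V d \<subseteq> {..<card (cube_V d)}"
proof -
  obtain h where h: "bij_betw h (cube_V d) {0..<card (cube_V d)}"
    using ex_bij_betw_finite_nat[OF finite_cube] by blast
  have inj: "inj_on h (cube_V d)" using h by (rule bij_betw_imp_inj_on)
  have img: "h ` cube_V d \<subseteq> {..<card (cube_V d)}" using h unfolding bij_betw_def by auto
  have "proper_coloring (cube_V d) cube_E h"
    unfolding proper_coloring_def
  proof (intro ballI impI)
    fix u v assume "u \<in> cube_V d" "v \<in> cube_V d" "cube_E u v"
    moreover then have "u \<noteq> v" using cube_E_irrefl by metis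
    ultimately show "h u \<noteq> h v" using inj unfolding inj_on_def by blast
  qed
  moreover have "\<not> has_induced_copy twoK2_V twoK2_E cube_E {v\<in>cube_V d. h v = i \<or> h v = j}" for i j
  proof
    assume "has_induced_copy twoK2_V twoK2_E cube_E {v\<in>cube_V d. h v = i \<or> h v = j}"
    then obtain f where f: "inj_on f twoK2_V" "f ` twoK2_V \<subseteq> {v\<in>cube_V d. h v = i \<or> h v = j}"
      unfolding has_induced_copy_def by blast
    have "f 0 \<noteq> f 2" "f 0 \<noteq> f 3" "f 2 \<noteq> f 3"
      using f(1) unfolding inj_on_def twoK2_V_def by auto
    moreover have m: "f 0 \<in> cube_V d" "f 2 \<in> cube_V d" "f 3 \<in> cube_V d"
      "h (f 0) = i \<or> h (f 0) = j" "h (f 2) = i \<or> h (f 2) = j" "h (f 3) = i \<or> h (f 3) = j"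
      using f(2) unfolding twoK2_V_def by auto
    ultimately show False using inj unfolding inj_on_def by metis
  qed
  ultimately show ?thesis using img unfolding H_avoiding_coloring_def by blast
qed




lemma dset_cons: "dset (x#xs) (y#ys) = (if x = y then {} else {0}) \<union> Suc ` dset xs ys"
proof (rule set_eqI)
  fix i
  show "i \<in> dset (x#xs) (y#ys) \<longleftrightarrow> i \<in> (if x = y then {} else {0}) \<union> Suc ` dset xs ys"
  proof (cases i)
    case 0 then show ?thesis unfolding dset_def by auto
  next
    case (Suc j) then show ?thesis unfolding dset_def by auto
  qed
qed

lemma cube_E_Nil1[simp]: "\<not> cube_E [] ys" unfolding cube_E_def by simp
lemma cube_E_Nil2[simp]: "\<not> cube_E xs []" unfolding cube_E_def by simp

lemma cube_E_cons: "cube_E (x#xs) (y#ys) \<longleftrightarrow> (if x = y then cube_E xs ys else xs = ys)"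
proof (cases "length xs = length ys")
  case False then show ?thesis unfolding cube_E_def by auto
next
  case True
  have cs: "card (Suc ` dset xs ys) = card (dset xs ys)" by (simp add: card_image)
  show ?thesis
  proof (cases "x = y")
    case True
    then show ?thesis using \<open>length xs = length ys\<close> cs unfolding cube_E_dset by (simp add: dset_cons)
  next
    case False
    have "card (dset (x#xs) (y#ys)) = Suc (card (dset xs ys))"
      using False cs by (simp add: dset_cons)
    moreover have "card (dset xs ys) = 0 \<longleftrightarrow> xs = ys"
      using dset_empty[OF \<open>length xs = length ys\<close>] by auto
    ultimately show ?thesis using False \<open>length xs = length ys\<close> unfolding cube_E_dset by simp
  qed
qed

lemma pat_lemma:
  assumes c: "H_avoiding_coloring twoK2_V twoK2_E V cube_E c"
  and S: "a\<in>V" "b\<in>V" "a'\<in>V" "b'\<in>V"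
  and dist: "a \<noteq> b" "a \<noteq> a'" "a \<noteq> b'" "b \<noteq> a'" "b \<noteq> b'" "a' \<noteq> b'"
  and e: "cube_E a b" "cube_E a' b'"
  and ne: "\<not>cube_E a a'" "\<not>cube_E a b'" "\<not>cube_E b a'" "\<not>cube_E b b'"
  shows "\<not>(c a = c a' \<and> c b = c b')"
proof
  assume cc: "c a = c a' \<and> c b = c b'"
  have "has_induced_copy twoK2_V twoK2_E cube_E {v\<in>V. c v = c a \<or> c v = c b}"
  proof (rule make_copy)
    show "a \<in> {v\<in>V. c v = c a \<or> c v = c b}" "b \<in> {v\<in>V. c v = c a \<or> c v = c b}"
      "a' \<in> {v\<in>V. c v = c a \<or> c v = c b}" "b' \<in> {v\<in>V. c v = c a \<or> c v = c b}" using S cc by auto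
    show "a \<noteq> b" "a \<noteq> a'" "a \<noteq> b'" "b \<noteq> a'" "b \<noteq> b'" "a' \<noteq> b'" by (fact dist)+
    show "cube_E a b" "cube_E b a" "cube_E a' b'" "cube_E b' a'" using e cube_E_sym by auto
    show "\<not>cube_E a a'" "\<not>cube_E a' a" "\<not>cube_E a b'" "\<not>cube_E b' a" "\<not>cube_E b a'" "\<not>cube_E a' b"
      "\<not>cube_E b b'" "\<not>cube_E b' b" using ne cube_E_sym by auto
    show "\<not>cube_E a a" "\<not>cube_E b b" "\<not>cube_E a' a'" "\<not>cube_E b' b'" using cube_E_irrefl by auto
  qed
  then show False using c unfolding H_avoiding_coloring_def by blast
qed

lemma get_quad:
  assumes "has_induced_copy twoK2_V twoK2_E E S"
  shows "\<exists>a b a' b'. a\<in>S \<and> b\<in>S \<and> a'\<in>S \<and> b'\<in>S \<and> E a b \<and> E a' b' \<and>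
     \<not>E a a' \<and> \<not>E a b' \<and> \<not>E b a' \<and> \<not>E b b'"
proof -
  obtain f where f: "f ` twoK2_V \<subseteq> S" "\<forall>m\<in>twoK2_V. \<forall>n\<in>twoK2_V. E (f m) (f n) \<longleftrightarrow> twoK2_E m n"
    using assms unfolding has_induced_copy_def by blast
  have "f 0 \<in> S" "f 1 \<in> S" "f 2 \<in> S" "f 3 \<in> S" using f(1) unfolding twoK2_V_def by auto
  moreover have "E (f 0) (f 1)" "E (f 2) (f 3)" "\<not>E (f 0) (f 2)" "\<not>E (f 0) (f 3)"
    "\<not>E (f 1) (f 2)" "\<not>E (f 1) (f 3)"
    using f(2) unfolding twoK2_V_def twoK2_E_def by (auto simp: doubleton_eq_iff)
  ultimately show ?thesis by blast
qed

definition c3 :: "bool list \<Rightarrow> nat" where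
  "c3 xs = (if xs = [False, False, False] then 0 else if xs = [True, False, False] then 1 else if xs = [False, True, False] then 1 else if xs = [True, True, False] then 2 else if xs = [False, False, True] then 3 else if xs = [True, False, True] then 0 else if xs = [False, True, True] then 2 else 3)"

lemma cube3: "cube_V 3 = {[False, False, False], [True, False, False], [False, True, False], [True, True, False], [False, False, True], [True, False, True], [False, True, True], [True, True, True]}"
  (is "_ = ?R")
proof
  show "cube_V 3 \<subseteq> ?R"
  proof
    fix xs assume "xs \<in> cube_V 3"
    then have "length xs = Suc (Suc (Suc 0))" unfolding cube_V_def by simp
    then obtain a b c where "xs = [a,b,c]" by (auto simp: length_Suc_conv)
    then show "xs \<in> ?R" by (cases a; cases b; cases c) simp_all
  qed
  show "?R \<subseteq> cube_V 3" unfolding cube_V_def by simp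
qed

lemma Q3_low:
  assumes c: "H_avoiding_coloring twoK2_V twoK2_E (cube_V 3) cube_E c" and k: "c ` cube_V 3 \<subseteq> {..<3}"
  shows False
proof -
  define x0 where "x0 = c [False, False, False]"
  define x1 where "x1 = c [True, False, False]"
  define x2 where "x2 = c [False, True, False]"
  define x3 where "x3 = c [True, True, False]"
  define x4 where "x4 = c [False, False, True]"
  define x5 where "x5 = c [True, False, True]"
  define x6 where "x6 = c [False, True, True]"
  define x7 where "x7 = c [True, True, True]"
  have r0: "x0 = 0 \<or> x0 = 1 \<or> x0 = 2" proof - have "x0 < 3" using k unfolding x0_def cube3 by auto then show ?thesis by auto qed
  have r1: "x1 = 0 \<or> x1 = 1 \<or> x1 = 2" proof - have "x1 < 3" using k unfolding x1_def cube3 by auto then show ?thesis by auto qed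
  have r2: "x2 = 0 \<or> x2 = 1 \<or> x2 = 2" proof - have "x2 < 3" using k unfolding x2_def cube3 by auto then show ?thesis by auto qed
  have r3: "x3 = 0 \<or> x3 = 1 \<or> x3 = 2" proof - have "x3 < 3" using k unfolding x3_def cube3 by auto then show ?thesis by auto qed
  have r4: "x4 = 0 \<or> x4 = 1 \<or> x4 = 2" proof - have "x4 < 3" using k unfolding x4_def cube3 by auto then show ?thesis by auto qed
  have r5: "x5 = 0 \<or> x5 = 1 \<or> x5 = 2" proof - have "x5 < 3" using k unfolding x5_def cube3 by auto then show ?thesis by auto qed
  have r6: "x6 = 0 \<or> x6 = 1 \<or> x6 = 2" proof - have "x6 < 3" using k unfolding x6_def cube3 by auto then show ?thesis by auto qed
  have r7: "x7 = 0 \<or> x7 = 1 \<or> x7 = 2" proof - have "x7 < 3" using k unfolding x7_def cube3 by auto then show ?thesis by auto qed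
  have prp: "\<And>u v. u \<in> cube_V 3 \<Longrightarrow> v \<in> cube_V 3 \<Longrightarrow> cube_E u v \<Longrightarrow> c u \<noteq> c v"
    using c unfolding H_avoiding_coloring_def proper_coloring_def by blast
  have e0: "x0 \<noteq> x1" unfolding x0_def x1_def by (rule prp) (simp_all add: cube3 cube_E_cons)
  have e1: "x0 \<noteq> x2" unfolding x0_def x2_def by (rule prp) (simp_all add: cube3 cube_E_cons)
  have e2: "x0 \<noteq> x4" unfolding x0_def x4_def by (rule prp) (simp_all add: cube3 cube_E_cons)
  have e3: "x1 \<noteq> x3" unfolding x1_def x3_def by (rule prp) (simp_all add: cube3 cube_E_cons)
  have e4: "x1 \<noteq> x5" unfolding x1_def x5_def by (rule prp) (simp_all add: cube3 cube_E_cons)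
  have e5: "x2 \<noteq> x3" unfolding x2_def x3_def by (rule prp) (simp_all add: cube3 cube_E_cons)
  have e6: "x2 \<noteq> x6" unfolding x2_def x6_def by (rule prp) (simp_all add: cube3 cube_E_cons)
  have e7: "x3 \<noteq> x7" unfolding x3_def x7_def by (rule prp) (simp_all add: cube3 cube_E_cons)
  have e8: "x4 \<noteq> x5" unfolding x4_def x5_def by (rule prp) (simp_all add: cube3 cube_E_cons)
  have e9: "x4 \<noteq> x6" unfolding x4_def x6_def by (rule prp) (simp_all add: cube3 cube_E_cons)
  have e10: "x5 \<noteq> x7" unfolding x5_def x7_def by (rule prp) (simp_all add: cube3 cube_E_cons)
  have e11: "x6 \<noteq> x7" unfolding x6_def x7_def by (rule prp) (simp_all add: cube3 cube_E_cons)
  have p0: "\<not>(x0 = x6 \<and> x1 = x7)" unfolding x0_def x1_def x6_def x7_def by (rule pat_lemma[OF c]) (simp_all add: cube3 cube_E_cons)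
  have p1: "\<not>(x0 = x7 \<and> x1 = x6)" unfolding x0_def x1_def x7_def x6_def by (rule pat_lemma[OF c]) (simp_all add: cube3 cube_E_cons)
  have p2: "\<not>(x0 = x5 \<and> x2 = x7)" unfolding x0_def x2_def x5_def x7_def by (rule pat_lemma[OF c]) (simp_all add: cube3 cube_E_cons)
  have p3: "\<not>(x0 = x7 \<and> x2 = x5)" unfolding x0_def x2_def x7_def x5_def by (rule pat_lemma[OF c]) (simp_all add: cube3 cube_E_cons)
  have p4: "\<not>(x0 = x3 \<and> x4 = x7)" unfolding x0_def x4_def x3_def x7_def by (rule pat_lemma[OF c]) (simp_all add: cube3 cube_E_cons)
  have p5: "\<not>(x0 = x7 \<and> x4 = x3)" unfolding x0_def x4_def x7_def x3_def by (rule pat_lemma[OF c]) (simp_all add: cube3 cube_E_cons)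
  have p6: "\<not>(x1 = x4 \<and> x3 = x6)" unfolding x1_def x3_def x4_def x6_def by (rule pat_lemma[OF c]) (simp_all add: cube3 cube_E_cons)
  have p7: "\<not>(x1 = x6 \<and> x3 = x4)" unfolding x1_def x3_def x6_def x4_def by (rule pat_lemma[OF c]) (simp_all add: cube3 cube_E_cons)
  have p8: "\<not>(x1 = x2 \<and> x5 = x6)" unfolding x1_def x5_def x2_def x6_def by (rule pat_lemma[OF c]) (simp_all add: cube3 cube_E_cons)
  have p9: "\<not>(x1 = x6 \<and> x5 = x2)" unfolding x1_def x5_def x6_def x2_def by (rule pat_lemma[OF c]) (simp_all add: cube3 cube_E_cons)
  have p10: "\<not>(x2 = x4 \<and> x3 = x5)" unfolding x2_def x3_def x4_def x5_def by (rule pat_lemma[OF c]) (simp_all add: cube3 cube_E_cons)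
  have p11: "\<not>(x2 = x5 \<and> x3 = x4)" unfolding x2_def x3_def x5_def x4_def by (rule pat_lemma[OF c]) (simp_all add: cube3 cube_E_cons)
  show False using r0 r1 r2 r3 r4 r5 r6 r7 e0 e1 e2 e3 e4 e5 e6 e7 e8 e9 e10 e11 p0 p1 p2 p3 p4 p5 p6 p7 p8 p9 p10 p11 by auto
qed



lemma c3v0[simp]: "c3 [False, False, False] = 0" by (simp add: c3_def)
lemma c3v1[simp]: "c3 [True, False, False] = 1" by (simp add: c3_def)
lemma c3v2[simp]: "c3 [False, True, False] = 1" by (simp add: c3_def)
lemma c3v3[simp]: "c3 [True, True, False] = 2" by (simp add: c3_def)
lemma c3v4[simp]: "c3 [False, False, True] = 3" by (simp add: c3_def)
lemma c3v5[simp]: "c3 [True, False, True] = 0" by (simp add: c3_def)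
lemma c3v6[simp]: "c3 [False, True, True] = 2" by (simp add: c3_def)
lemma c3v7[simp]: "c3 [True, True, True] = 3" by (simp add: c3_def)

lemma edges3: "\<forall>a\<in>cube_V 3. \<forall>b\<in>cube_V 3. cube_E a b \<longrightarrow> (a, b) \<in> set [([False, False, False], [True, False, False]), ([False, False, False], [False, True, False]), ([False, False, False], [False, False, True]), ([True, False, False], [False, False, False]), ([True, False, False], [True, True, False]), ([True, False, False], [True, False, True]), ([False, True, False], [False, False, False]), ([False, True, False], [True, True, False]), ([False, True, False], [False, True, True]), ([True, True, False], [True, False, False]), ([True, True, False], [False, True, False]), ([True, True, False], [True, True, True]), ([False, False, True], [False, False, False]), ([False, False, True], [True, False, True]), ([False, False, True], [False, True, True]), ([True, False, True], [True, False, False]), ([True, False, True], [False, False, True]), ([True, False, True], [True, True, True]), ([False, True, True], [False, True, False]), ([False, True, True], [False, False, True]), ([False, True, True], [True, True, True]), ([True, True, True], [True, True, False]), ([True, True, True], [True, False, True]), ([True, True, True], [False, True, True])]"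
  unfolding cube3 by (simp add: cube_E_cons)

lemma pats3: "\<forall>p\<in>set [([False, False, False], [True, False, False]), ([False, False, False], [False, True, False]), ([False, False, False], [False, False, True]), ([True, False, False], [False, False, False]), ([True, False, False], [True, True, False]), ([True, False, False], [True, False, True]), ([False, True, False], [False, False, False]), ([False, True, False], [True, True, False]), ([False, True, False], [False, True, True]), ([True, True, False], [True, False, False]), ([True, True, False], [False, True, False]), ([True, True, False], [True, True, True]), ([False, False, True], [False, False, False]), ([False, False, True], [True, False, True]), ([False, False, True], [False, True, True]), ([True, False, True], [True, False, False]), ([True, False, True], [False, False, True]), ([True, False, True], [True, True, True]), ([False, True, True], [False, True, False]), ([False, True, True], [False, False, True]), ([False, True, True], [True, True, True]), ([True, True, True], [True, True, False]), ([True, True, True], [True, False, True]), ([True, True, True], [False, True, True])]. \<forall>q\<in>set [([False, False, False], [True, False, False]), ([False, False, False], [False, True, False]), ([False, False, False], [False, False, True]), ([True, False, False], [False, False, False]), ([True, False, False], [True, True, False]), ([True, False, False], [True, False, True]), ([False, True, False], [False, False, False]), ([False, True, False], [True, True, False]), ([False, True, False], [False, True, True]), ([True, True, False], [True, False, False]), ([True, True, False], [False, True, False]), ([True, True, False], [True, True, True]), ([False, False, True], [False, False, False]), ([False, False, True], [True, False, True]), ([False, False, True], [False, True, True]), ([True, False, True], [True, False, False]), ([True, False, True], [False, False, True]), ([True, False, True], [True, True, True]), ([False, True, True], [False, True, False]), ([False, True, True], [False, False, True]), ([False, True, True], [True, True, True]), ([True, True, True], [True, True, False]), ([True, True, True],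 [True, False, True]), ([True, True, True], [False, True, True])]. \<not>cube_E (fst p) (fst q) \<longrightarrow> \<not>cube_E (fst p) (snd q) \<longrightarrow> \<not>cube_E (snd p) (fst q) \<longrightarrow> \<not>cube_E (snd p) (snd q) \<longrightarrow> 3 \<le> card {c3 (fst p), c3 (snd p), c3 (fst q), c3 (snd q)}"
  by (simp add: cube_E_cons card_insert_if)

lemma c3_ok: "H_avoiding_coloring twoK2_V twoK2_E (cube_V 3) cube_E c3"
  unfolding H_avoiding_coloring_def
proof (intro conjI allI)
  show "proper_coloring (cube_V 3) cube_E c3"
    unfolding proper_coloring_def cube3 by (simp add: cube_E_cons c3_def)
  fix i j
  show "\<not> has_induced_copy twoK2_V twoK2_E cube_E {v \<in> cube_V 3. c3 v = i \<or> c3 v = j}"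
  proof
    assume "has_induced_copy twoK2_V twoK2_E cube_E {v \<in> cube_V 3. c3 v = i \<or> c3 v = j}"
    then obtain a b a' b' where q: "a\<in>cube_V 3" "b\<in>cube_V 3" "a'\<in>cube_V 3" "b'\<in>cube_V 3"
      "c3 a = i \<or> c3 a = j" "c3 b = i \<or> c3 b = j" "c3 a' = i \<or> c3 a' = j" "c3 b' = i \<or> c3 b' = j"
      "cube_E a b" "cube_E a' b'" "\<not>cube_E a a'" "\<not>cube_E a b'" "\<not>cube_E b a'" "\<not>cube_E b b'"
      using get_quad by blast
    have m: "(a,b) \<in> set [([False, False, False], [True, False, False]), ([False, False, False], [False, True, False]), ([False, False, False], [False, False, True]), ([True, False, False], [False, False, False]), ([True, False, False], [True, True, False]), ([True, False, False], [True, False, True]), ([False, True, False], [False, False, False]), ([False, True, False], [True, True, False]), ([False, True, False], [False, True, True]), ([True, True, False], [True, False, False]), ([True, True, False], [False, True, False]), ([True, True, False], [True, True, True]), ([False, False, True], [False, False, False]), ([False, False, True], [True, False, True]), ([False, False, True], [False, True, True]), ([True, False, True], [True, False, False]), ([True, False, True], [False, False, True]), ([True, False, True], [True, True, True]), ([False, True, True], [False, True, False]), ([False, True, True], [False, False, True]), ([False, True, True], [True, True, True]), ([True, True, True], [True, True, False]), ([True, True, True], [True, False, True]), ([True, True, True], [False, True, True])]" "(a',b') \<in> set [([False, False, False], [True, False, False]), ([False, False, False], [False, True, False]), ([False, False, False], [False, False, True]), ([True, False, False], [False, False, False]), ([True, False, False], [True, True, False]), ([True, False, False], [True, False, True]),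 ([False, True, False], [False, False, False]), ([False, True, False], [True, True, False]), ([False, True, False], [False, True, True]), ([True, True, False], [True, False, False]), ([True, True, False], [False, True, False]), ([True, True, False], [True, True, True]), ([False, False, True], [False, False, False]), ([False, False, True], [True, False, True]), ([False, False, True], [False, True, True]), ([True, False, True], [True, False, False]), ([True, False, True], [False, False, True]), ([True, False, True], [True, True, True]), ([False, True, True], [False, True, False]), ([False, True, True], [False, False, True]), ([False, True, True], [True, True, True]), ([True, True, True], [True, True, False]), ([True, True, True], [True, False, True]), ([True, True, True], [False, True, True])]"
      using edges3 q(1-4,9,10) by blast+
    have "3 \<le> card {c3 a, c3 b, c3 a', c3 b'}"
      using bspec[OF bspec[OF pats3 m(1)] m(2)] q(11-14) by simp
    moreover have "{c3 a, c3 b, c3 a', c3 b'} \<subseteq> {i, j}" using q(5-8) by auto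
    then have "card {c3 a, c3 b, c3 a', c3 b'} \<le> card {i,j}" by (rule card_mono[rotated]) simp
    moreover have "card {i,j} \<le> 2" by (simp add: card_insert_if)
    ultimately show False by linarith
  qed
qed

lemma c3_range: "c3 ` cube_V 3 \<subseteq> {..<4}"
  unfolding cube3 by (auto simp: c3_def)

definition c2 :: "bool list \<Rightarrow> nat" where
  "c2 xs = (if xs = [False, False] \<or> xs = [True, True] then 0 else 1)"

lemma cube2: "cube_V 2 = {[False, False], [True, False], [False, True], [True, True]}"
  (is "_ = ?R")
proof
  show "cube_V 2 \<subseteq> ?R"
  proof
    fix xs assume "xs \<in> cube_V 2"
    then have "length xs = Suc (Suc 0)" unfolding cube_V_def by simp
    then obtain a b where "xs = [a,b]" by (auto simp: length_Suc_conv)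
    then show "xs \<in> ?R" by (cases a; cases b) simp_all
  qed
  show "?R \<subseteq> cube_V 2" unfolding cube_V_def by simp
qed

lemma c2_ok: "H_avoiding_coloring twoK2_V twoK2_E (cube_V 2) cube_E c2"
  unfolding H_avoiding_coloring_def
proof (intro conjI allI)
  show "proper_coloring (cube_V 2) cube_E c2"
    unfolding proper_coloring_def cube2 by (simp add: cube_E_cons c2_def)
  fix i j
  show "\<not> has_induced_copy twoK2_V twoK2_E cube_E {v \<in> cube_V 2. c2 v = i \<or> c2 v = j}"
  proof
    assume "has_induced_copy twoK2_V twoK2_E cube_E {v \<in> cube_V 2. c2 v = i \<or> c2 v = j}"
    then obtain a b a' b' where q: "a\<in>cube_V 2" "b\<in>cube_V 2" "a'\<in>cube_V 2" "b'\<in>cube_V 2"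
      "cube_E a b" "cube_E a' b'" "\<not>cube_E a a'" "\<not>cube_E a b'" "\<not>cube_E b a'" "\<not>cube_E b b'"
      using get_quad by blast
    show False using q unfolding cube2 by (auto simp: cube_E_cons)
  qed
qed

lemma c2_range: "c2 ` cube_V 2 \<subseteq> {..<2}"
  unfolding cube2 by (auto simp: c2_def)

lemma real_part:
  assumes d: "4 \<le> d" and ineq: "d * 2^d \<le> k * (k - 1) * (2*d - 1)"
  shows "sqrt (real d / (2 * real d - 1) * 2 ^ d) + 1/2 \<le> real k"
proof -
  have "d * 2^d > 0" using d by simp
  then have k1: "k \<ge> 1" using ineq by (cases k) auto
  have "real (d * 2^d) \<le> real (k * (k - 1) * (2*d - 1))" using ineq by (rule of_nat_mono)
  then have r: "real d * 2^d \<le> real k * (real k - 1) * (2 * real d - 1)"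
    using k1 d by (simp add: of_nat_diff)
  have pos: "2 * real d - 1 > 0" using d by simp
  define X where "X = real d / (2 * real d - 1) * 2 ^ d"
  have "X = real d * 2^d / (2 * real d - 1)" unfolding X_def by simp
  also have "\<dots> \<le> real k * (real k - 1)" using r pos by (simp add: pos_divide_le_eq)
  also have "\<dots> \<le> (real k - 1/2)^2" by (simp add: power2_eq_square algebra_simps)
  finally have "X \<le> (real k - 1/2)^2" .
  then have "sqrt X \<le> sqrt ((real k - 1/2)^2)" by (rule real_sqrt_le_mono)
  also have "\<dots> = real k - 1/2" using k1 by simp
  finally show ?thesis unfolding X_def by simp
qed




theorem corollary5:
  shows "chi_2K2_cube 2 = 2 \<and> chi_2K2_cube 3 = 4 \<and>
         (\<forall>d::nat. d \<ge> 4 \<longrightarrow>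
            real (chi_2K2_cube d) \<ge> sqrt (real d / (2 * real d - 1) * 2 ^ d) + 1 / 2)"
proof -
  define Pk where "Pk d k = (\<exists>c. H_avoiding_coloring twoK2_V twoK2_E (cube_V d) cube_E c \<and> c ` cube_V d \<subseteq> {..<k})" for d k
  have chi: "chi_2K2_cube d = (LEAST k. Pk d k)" for d
    unfolding chi_2K2_cube_def chi_H_def Pk_def by simp
  have Q2: "chi_2K2_cube 2 = 2"
    unfolding chi
  proof (rule Least_equality)
    show "Pk 2 2" unfolding Pk_def using c2_ok c2_range by blast
    fix y assume "Pk 2 y"
    then obtain c where c: "H_avoiding_coloring twoK2_V twoK2_E (cube_V 2) cube_E c" "c ` cube_V 2 \<subseteq> {..<y}"
      unfolding Pk_def by blast
    have m: "[False, False] \<in> cube_V 2" "[True, False] \<in> cube_V 2" unfolding cube_V_def by auto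
    have "cube_E [False, False] [True, False]" by (simp add: cube_E_cons)
    then have "c [False, False] \<noteq> c [True, False]"
      using c(1) m unfolding H_avoiding_coloring_def proper_coloring_def by blast
    moreover have "c [False, False] < y" "c [True, False] < y" using c(2) m by auto
    ultimately show "2 \<le> y" by linarith
  qed
  have Q3: "chi_2K2_cube 3 = 4"
    unfolding chi
  proof (rule Least_equality)
    show "Pk 3 4" unfolding Pk_def using c3_ok c3_range by blast
    fix y assume "Pk 3 y"
    then obtain c where c: "H_avoiding_coloring twoK2_V twoK2_E (cube_V 3) cube_E c" "c ` cube_V 3 \<subseteq> {..<y}"
      unfolding Pk_def by blast
    show "4 \<le> y"
    proof (rule ccontr)
      assume "\<not> 4 \<le> y"
      then have "c ` cube_V 3 \<subseteq> {..<3}" using c(2) by auto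
      then show False using Q3_low[OF c(1)] by blast
    qed
  qed
  have Qd: "real (chi_2K2_cube d) \<ge> sqrt (real d / (2 * real d - 1) * 2 ^ d) + 1 / 2" if d: "d \<ge> 4" for d
  proof -
    have "Pk d (card (cube_V d))" unfolding Pk_def using exists_col by blast
    then have "Pk d (LEAST k. Pk d k)" by (rule LeastI)
    then obtain c where c: "H_avoiding_coloring twoK2_V twoK2_E (cube_V d) cube_E c"
      "c ` cube_V d \<subseteq> {..<chi_2K2_cube d}"
      unfolding Pk_def chi by blast
    have "d * 2^d \<le> chi_2K2_cube d * (chi_2K2_cube d - 1) * (2*d - 1)"
      using main_ineq[OF _ c] d by simp
    then show ?thesis using real_part[OF d] by simp
  qed
  show ?thesis using Q2 Q3 Qd by blast
qed


end
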